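(* Let $r\ne0$ be an integer, $K$ a field of characteristic not dividing $2r$, and $E_r$ the elliptic curve $y^2=x^3-r^{-1}x$, embedded in $\mathbb{P}^2$ as $x^3-rxz^2-ry^2z=0$, the affine point $(x,y)$ corresponding to $(x:y:r^{-1})$ and $O=(0:1:0)$. Let $Q=(a,b)$ be an affine $3$-torsion point of $E_r$, and let $A\in\mathrm{GL}_3(K)$ be such that the projective transformation $\bar A$ of $\mathbb{P}^2$ (acting on column vectors of homogeneous coordinates $(x,y,z)^{\mathrm T}$) maps $E_r$ into itself and restricts to the translation $\tau_Q:P\mapsto P+Q$ on $E_r$. Then there exists $\nu\in K^\times$ such that, up to multiplication by a nonzero scalar, $$A=\begin{pmatrix} rab+2ab\nu & ra^2 & -2ra^2b\nu\\ (-3r-2\nu)b^2 & rab & 2rab^2\nu\\ (1-2\nu a^2)b & a & 2ra^3b\nu\end{pmatrix}.$$ *)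

theory Defs
  imports "HOL-Analysis.Analysis" "HOL-Computational_Algebra.Polynomial"
begin

datatype 'a ept = Inf | Aff 'a 'a

fun on_curve :: "'a::field \<Rightarrow> 'a ept \<Rightarrow> bool" where
  "on_curve c Inf = True"
| "on_curve c (Aff x y) = (y ^ 2 = x ^ 3 + c * x)"

fun ec_add :: "'a::field \<Rightarrow> 'a ept \<Rightarrow> 'a ept \<Rightarrow> 'a ept" where
  "ec_add c Inf P = P"
| "ec_add c P Inf = P"
| "ec_add c (Aff x1 y1) (Aff x2 y2) =
     (if x1 = x2 then
        (if y1 = - y2 then Inf
         else (let l = (3 * x1 ^ 2 + c) / (2 * y1);
                   x3 = l ^ 2 - 2 * x1
               in Aff x3 (l * (x1 - x3) - y1)))
      else (let l = (y2 - y1) / (x2 - x1);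
                x3 = l ^ 2 - x1 - x2
            in Aff x3 (l * (x1 - x3) - y1)))"

(* homogeneous coordinates of a point of E_r (curve x^3 - r x z^2 - r y^2 z = 0):
   affine (x,y) |-> (x : y : r^{-1}),  O |-> (0 : 1 : 0);  rinv stands for r^{-1} *)
fun proj_coords :: "'a::field \<Rightarrow> 'a ept \<Rightarrow> 'a ^ 3" where
  "proj_coords rinv Inf = vector [0, 1, 0]"
| "proj_coords rinv (Aff x y) = vector [x, y, rinv]"

definition proj_eq :: "'a::field ^ 3 \<Rightarrow> 'a ^ 3 \<Rightarrow> bool" where
  "proj_eq u v \<longleftrightarrow> (\<exists>c. c \<noteq> 0 \<and> u = c *s v)"

definition is_field_hom :: "('a::field \<Rightarrow> 'b::field) \<Rightarrow> bool" where
  "is_field_hom \<phi> \<longleftrightarrow> (\<forall>x y. \<phi> (x + y) = \<phi> x + \<phi> y \<and> \<phi> (x * y) = \<phi> x * \<phi> y) \<and> \<phi> 1 = 1"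

definition map_mat :: "('a \<Rightarrow> 'b) \<Rightarrow> 'a ^ 'n ^ 'm \<Rightarrow> 'b ^ 'n ^ 'm" where
  "map_mat \<phi> A = (\<chi> i j. \<phi> (A $ i $ j))"

definition lemma_mat :: "'a::field \<Rightarrow> 'a \<Rightarrow> 'a \<Rightarrow> 'a \<Rightarrow> 'a ^ 3 ^ 3" where
  "lemma_mat r a b \<nu> = vector [
     vector [r*a*b + 2*a*b*\<nu>, r*a^2, -2*r*a^2*b*\<nu>],
     vector [(-3*r - 2*\<nu>)*b^2, r*a*b, 2*r*a*b^2*\<nu>],
     vector [(1 - 2*\<nu>*a^2)*b, a, 2*r*a^3*b*\<nu>]]"

end

theory Submission imports Defs begin

lemma mv3: "((m::'a::comm_semiring_1^3^3) *v vector [x,y,z]) $ i = m$i$1 * x + m$i$2 * y + m$i$3 * z"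
  by (simp add: matrix_vector_mult_def sum_3)

context fixes \<phi> :: "'a::field \<Rightarrow> 'b::field" assumes hom: "is_field_hom \<phi>"
begin
lemma h_add: "\<phi> (x + y) = \<phi> x + \<phi> y" using hom by (simp add: is_field_hom_def)
lemma h_mult: "\<phi> (x * y) = \<phi> x * \<phi> y" using hom by (simp add: is_field_hom_def)
lemma h_1: "\<phi> 1 = 1" using hom by (simp add: is_field_hom_def)
lemma h_0: "\<phi> 0 = 0"
proof -
  have "\<phi> 0 + \<phi> 0 = \<phi> 0 + 0" using h_add[of 0 0] by simp
  then show ?thesis by (simp only: add_left_cancel)
qed
lemma h_uminus: "\<phi> (- x) = - \<phi> x" using h_add[of "-x" x] h_0 by (simp add: eq_neg_iff_add_eq_0)
lemma h_diff: "\<phi> (x - y) = \<phi> x - \<phi> y"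
proof -
  have "\<phi> (x - y) = \<phi> (x + - y)" by simp
  also have "\<dots> = \<phi> x + - \<phi> y" by (simp only: h_add h_uminus)
  finally show ?thesis by simp
qed
lemma h_inverse: "\<phi> (inverse x) = inverse (\<phi> x)"
proof (cases "x = 0")
  case True then show ?thesis by (simp add: h_0)
next
  case False
  have "\<phi> x * \<phi> (inverse x) = 1" using False by (simp add: h_mult[symmetric] h_1)
  then show ?thesis by (rule inverse_unique[symmetric])
qed
lemma h_divide: "\<phi> (x / y) = \<phi> x / \<phi> y" by (simp add: divide_inverse h_mult h_inverse)
lemma h_power: "\<phi> (x ^ n) = \<phi> x ^ n" by (induction n) (simp_all add: h_1 h_mult)
lemma h_of_nat: "\<phi> (of_nat n) = of_nat n" by (induction n) (simp_all add: h_0 h_1 h_add)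
lemma h_numeral: "\<phi> (numeral n) = numeral n" using h_of_nat[of "numeral n"] by simp
lemma h_of_int: "\<phi> (of_int z) = of_int z"
  by (cases z rule: int_cases) (simp_all add: h_of_nat h_uminus h_diff h_1)
lemma h_inj: "\<phi> x = \<phi> y \<Longrightarrow> x = y"
proof (rule ccontr)
  assume e: "\<phi> x = \<phi> y" and n: "x \<noteq> y"
  have "\<phi> (x - y) * \<phi> (inverse (x - y)) = 1" using n by (simp add: h_mult[symmetric] h_1)
  moreover have "\<phi> (x - y) = 0" using e by (simp add: h_diff)
  ultimately show False by simp
qed
lemma h_inj_iff: "\<phi> x = \<phi> y \<longleftrightarrow> x = y" using h_inj by blast
lemma h_neg_iff: "\<phi> x = - \<phi> y \<longleftrightarrow> x = - y" using h_inj[of x "-y"] by (auto simp: h_uminus)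
lemma h_zero_iff: "\<phi> x = 0 \<longleftrightarrow> x = 0" using h_inj[of x 0] by (auto simp: h_0)
lemmas h_simps = h_add h_mult h_1 h_0 h_uminus h_diff h_inverse h_divide h_power h_numeral h_of_int
end


lemma solve_L:
  fixes m :: "'L::field^3^3" and a b q R x4 y4 :: 'L
  assumes a0: "a \<noteq> 0" and b0: "b \<noteq> 0" and Rs: "R* q = 1" and two: "(2::'L) \<noteq> 0"
    and curve: "b^2 = a^3 - q*a"
    and x4: "x4 = (b/a)^2 - a" and y4: "y4 = - (b/a) * x4"
    and h1: "proj_eq (m *v vector[0,1,0]) (vector[a,b,q])"
    and h2: "proj_eq (m *v vector[a,-b,q]) (vector[0,1,0])"
    and h3: "proj_eq (m *v vector[a,b,q]) (vector[a,-b,q])"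
    and h4: "proj_eq (m *v vector[0,0,q]) (vector[x4,y4,q])"
  shows "\<exists>l1 l4. l1 \<noteq> 0 \<and> l4 \<noteq> 0 \<and> m$1$2 = l1*a \<and> m$3$3 = l4 \<and>
     m = (\<chi> i j. (l1/(R*a)) * lemma_mat R a b (l4/(2*l1*a^2*b)) $ i $ j)"
proof -
  have R0: "R \<noteq> 0" and q0: "q \<noteq> 0" using Rs by auto
  have qR: "q = 1/R" using Rs R0 by (simp add: field_simps)
  obtain l1 where l1: "l1 \<noteq> 0" "m *v vector[0,1,0] = l1 *s vector[a,b,q]"
    using h1 unfolding proj_eq_def by blast
  obtain l2 where l2: "l2 \<noteq> 0" "m *v vector[a,-b,q] = l2 *s vector[0,1,0]"
    using h2 unfolding proj_eq_def by blast
  obtain l3 where l3: "l3 \<noteq> 0" "m *v vector[a,b,q] = l3 *s vector[a,-b,q]"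
    using h3 unfolding proj_eq_def by blast
  obtain l4 where l4: "l4 \<noteq> 0" "m *v vector[0,0,q] = l4 *s vector[x4,y4,q]"
    using h4 unfolding proj_eq_def by blast
  have e1: "m$1$2 = l1*a" "m$2$2 = l1*b" "m$3$2 = l1* q"
    using l1(2) by (simp_all add: vec_eq_iff forall_3 mv3)
  have e2: "m$1$1*a - m$1$2*b + m$1$3* q = 0" "m$2$1*a - m$2$2*b + m$2$3* q = l2"
     "m$3$1*a - m$3$2*b + m$3$3* q = 0"
    using l2(2) by (simp_all add: vec_eq_iff forall_3 mv3)
  have e3: "m$1$1*a + m$1$2*b + m$1$3* q = l3*a" "m$2$1*a + m$2$2*b + m$2$3* q = - l3*b"
     "m$3$1*a + m$3$2*b + m$3$3* q = l3* q"
    using l3(2) by (simp_all add: vec_eq_iff forall_3 mv3)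
  have e4: "m$1$3* q = l4*x4" "m$2$3* q = l4*y4" "m$3$3* q = l4* q"
    using l4(2) by (simp_all add: vec_eq_iff forall_3 mv3)
  have x4a: "a^2 * x4 = b^2 - a^3" using x4 a0 by (simp add: field_simps power2_eq_square power3_eq_cube)
  hence "a^2 * x4 = - q * a" using curve by simp
  hence "a * (a * x4 + q) = 0" by (simp add: algebra_simps power2_eq_square)
  hence "a * x4 + q = 0" using a0 by simp
  hence "a * x4 = - q" by (simp only: eq_neg_iff_add_eq_0)
  hence x4': "x4 = - q/a" using a0 by (simp add: field_simps)
  have y4': "y4 = b* q/a^2" using y4 x4' a0 by (simp add: field_simps power2_eq_square)
  have m33: "m$3$3 = l4" using e4(3) q0 by simp
  have "m$1$3 * q = (- l4/a) * q" using e4(1) x4' by simp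
  hence m13: "m$1$3 = - l4/a" by (rule mult_right_cancel[OF q0, THEN iffD1])
  have "m$2$3 * q = (l4*b/a^2) * q" using e4(2) y4' by simp
  hence m23: "m$2$3 = l4*b/a^2" by (rule mult_right_cancel[OF q0, THEN iffD1])
  have "(m$1$1*a + m$1$2*b + m$1$3* q) - (m$1$1*a - m$1$2*b + m$1$3* q) = l3*a" using e2(1) e3(1) by simp
  hence "2*(l1*a)*b = l3*a" unfolding e1(1) by (simp add: algebra_simps)
  hence l3v: "l3 = 2*l1*b" using a0 by (simp add: algebra_simps)
  have "(m$2$1*a + m$2$2*b + m$2$3* q) - (m$2$1*a - m$2$2*b + m$2$3* q) = - l3*b - l2" using e2(2) e3(2) by simp
  hence "2*(l1*b)*b = - l3*b - l2" unfolding e1(2) by (simp add: algebra_simps)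
  hence "l2 + 4*l1*b^2 = 0" unfolding l3v by (simp add: algebra_simps power2_eq_square)
  hence l2v: "l2 = - (4*l1*b^2)" by (simp only: eq_neg_iff_add_eq_0)
  have "m$1$1*a = m$1$2*b - m$1$3* q" using e2(1) by (simp add: algebra_simps)
  hence m11: "m$1$1 = l1*b + l4*q/a^2" using a0 unfolding e1 m13 by (simp add: field_simps power2_eq_square)
  have "m$2$1*a = l2 + m$2$2*b - m$2$3* q" using e2(2) by (simp add: algebra_simps)
  hence m21: "m$2$1 = (-3*l1*b^2 - l4*b*q/a^2)/a" using a0 unfolding e1 m23 l2v by (simp add: field_simps power2_eq_square)
  have "m$3$1*a = m$3$2*b - m$3$3* q" using e2(3) by (simp add: algebra_simps)
  hence m31: "m$3$1 = (l1*q*b - l4*q)/a" using a0 unfolding e1 m33 by (simp add: field_simps)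
  have "m = (\<chi> i j. (l1/(R*a)) * lemma_mat R a b (l4/(2*l1*a^2*b)) $ i $ j)"
    unfolding vec_eq_iff forall_3 lemma_mat_def
    using a0 b0 R0 two l1(1)
    by (simp add: m11 m21 m31 e1 m13 m23 m33 qR field_simps power2_eq_square power3_eq_cube)
  then show ?thesis using l1(1) l4(1) e1(1) m33 by blast
qed


fun emap :: "('a \<Rightarrow> 'b) \<Rightarrow> 'a ept \<Rightarrow> 'b ept" where
  "emap f Inf = Inf"
| "emap f (Aff x y) = Aff (f x) (f y)"

lemma ec_add_hom:
  assumes hom: "is_field_hom \<phi>"
  shows "ec_add (\<phi> c) (emap \<phi> P) (emap \<phi> Q) = emap \<phi> (ec_add c P Q)"
proof (cases P)
  case Inf then show ?thesis by simp
next
  case (Aff x1 y1) note P = this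
  show ?thesis
  proof (cases Q)
    case Inf then show ?thesis using P by simp
  next
    case (Aff x2 y2)
    then show ?thesis using P
      by (simp add: Let_def h_simps[OF hom] h_inj_iff[OF hom] h_neg_iff[OF hom])
  qed
qed

lemma on_curve_hom:
  assumes hom: "is_field_hom \<phi>"
  shows "on_curve (\<phi> c) (emap \<phi> P) = on_curve c P"
proof (cases P)
  case Inf then show ?thesis by simp
next
  case (Aff x y)
  have "(\<phi> y ^ 2 = \<phi> x ^ 3 + \<phi> c * \<phi> x) = (\<phi> (y^2) = \<phi> (x ^ 3 + c * x))"
    by (simp add: h_simps[OF hom])
  then show ?thesis using Aff by (simp add: h_inj_iff[OF hom])
qed

lemma map_mat_lemma_mat:
  assumes hom: "is_field_hom \<phi>"
  shows "map_mat \<phi> (\<chi> i j. c * lemma_mat x a b n $ i $ j) =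
     (\<chi> i j. \<phi> c * lemma_mat (\<phi> x) (\<phi> a) (\<phi> b) (\<phi> n) $ i $ j)"
  unfolding vec_eq_iff forall_3 lemma_mat_def map_mat_def
  by (simp add: h_simps[OF hom])

lemma map_mat_inj:
  assumes hom: "is_field_hom \<phi>" and e: "map_mat \<phi> A = map_mat \<phi> B"
  shows "A = B"
  using e unfolding vec_eq_iff map_mat_def by (simp add: h_inj_iff[OF hom])


theorem lemma3p9:
  fixes r :: int and a b :: "'k::field" and A :: "'k ^ 3 ^ 3"
    and \<phi> :: "'k \<Rightarrow> 'L::alg_closed_field"
  assumes r: "r \<noteq> 0"
    and char: "of_int (2 * r) \<noteq> (0::'k)"
    and Q_on: "on_curve (- 1 / of_int r) (Aff a b)"
    and Q_3tors: "ec_add (- 1 / of_int r) (Aff a b) (ec_add (- 1 / of_int r) (Aff a b) (Aff a b)) = Inf"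
    and A_GL: "det A \<noteq> 0"
    and hom: "is_field_hom \<phi>"
    and transl: "\<forall>P. on_curve (\<phi> (- 1 / of_int r)) P \<longrightarrow>
        proj_eq (map_mat \<phi> A *v proj_coords (\<phi> (1 / of_int r)) P)
                (proj_coords (\<phi> (1 / of_int r)) (ec_add (\<phi> (- 1 / of_int r)) P (Aff (\<phi> a) (\<phi> b))))"
  shows "\<exists>\<nu>::'k. \<nu> \<noteq> 0 \<and> (\<exists>c::'k. c \<noteq> 0 \<and> A = (\<chi> i j. c * lemma_mat (of_int r) a b \<nu> $ i $ j))"
proof -
  define C :: 'k where "C = - 1 / of_int r"
  define q :: 'k where "q = 1 / of_int r"
  have r0: "(of_int r :: 'k) \<noteq> 0" and two: "(2::'k) \<noteq> 0" using char by auto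
  have Cq: "C = - q" unfolding C_def q_def by simp
  have onQ: "b^2 = a^3 + C*a" using Q_on unfolding C_def by simp
  have b0: "b \<noteq> 0"
  proof
    assume "b = 0"
    hence "ec_add C (Aff a b) (Aff a b) = Inf" by simp
    hence "ec_add C (Aff a b) (ec_add C (Aff a b) (Aff a b)) = Aff a b" by simp
    then show False using Q_3tors unfolding C_def by simp
  qed
  have a0: "a \<noteq> 0" using onQ b0 by auto
  have bneq: "b \<noteq> - b" using b0 two by (metis add_eq_0_iff2 mult_2 mult_eq_0_iff)
  define l where "l = (3 * a^2 + C) / (2 * b)"
  have dbl: "ec_add C (Aff a b) (Aff a b) = Aff (l^2 - 2*a) (l*(a - (l^2 - 2*a)) - b)"
    using bneq unfolding l_def by (simp add: Let_def)
  have tors: "l^2 - 2*a = a"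
  proof (rule ccontr)
    assume ne: "l^2 - 2*a \<noteq> a"
    have "ec_add C (Aff a b) (Aff (l^2 - 2*a) (l*(a - (l^2 - 2*a)) - b)) \<noteq> Inf"
      using ne by (simp add: Let_def)
    then show False using Q_3tors dbl unfolding C_def by simp
  qed
  have dbl2: "ec_add C (Aff a b) (Aff a b) = Aff a (- b)" using dbl tors by simp
  have negQ: "ec_add C (Aff a (-b)) (Aff a b) = Inf" by simp
  define x4 where "x4 = (b/a)^2 - a"
  define y4 where "y4 = - (b/a) * x4"
  have TQ: "ec_add C (Aff 0 0) (Aff a b) = Aff x4 y4"
    using a0 unfolding x4_def y4_def by (simp add: Let_def)
  note T = transl[rule_format, folded C_def q_def]
  have pc: "proj_coords (\<phi> q) (emap \<phi> (Aff x y)) = vector [\<phi> x, \<phi> y, \<phi> q]" for x y by simp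
  have pc0: "proj_coords (\<phi> q) (emap \<phi> Inf) = vector [0, 1, 0]" by simp
  have TP: "proj_eq (map_mat \<phi> A *v proj_coords (\<phi> q) (emap \<phi> P))
                (proj_coords (\<phi> q) (emap \<phi> (ec_add C P (Aff a b))))" if "on_curve C P" for P
  proof -
    have "on_curve (\<phi> C) (emap \<phi> P)" using that on_curve_hom[OF hom] by simp
    from T[OF this] show ?thesis using ec_add_hom[OF hom, of C P "Aff a b"] by simp
  qed
  have h1: "proj_eq (map_mat \<phi> A *v vector[0,1,0]) (vector[\<phi> a, \<phi> b, \<phi> q])"
    using TP[of Inf] by simp
  have h2: "proj_eq (map_mat \<phi> A *v vector[\<phi> a, - \<phi> b, \<phi> q]) (vector[0,1,0])"
    using TP[of "Aff a (-b)"] onQ negQ by (simp add: h_simps[OF hom])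
  have h3: "proj_eq (map_mat \<phi> A *v vector[\<phi> a, \<phi> b, \<phi> q]) (vector[\<phi> a, - \<phi> b, \<phi> q])"
    using TP[of "Aff a b"] onQ dbl2 by (simp add: h_simps[OF hom])
  have h4: "proj_eq (map_mat \<phi> A *v vector[0, 0, \<phi> q]) (vector[\<phi> x4, \<phi> y4, \<phi> q])"
    using TP[of "Aff 0 0"] TQ by (simp add: h_simps[OF hom])
  have Rq: "\<phi> (of_int r) * \<phi> q = 1" using r0 unfolding q_def h_mult[OF hom, symmetric] by (simp add: h_1[OF hom])
  have two': "(2::'L) \<noteq> 0" using two h_zero_iff[OF hom, of 2] by (simp add: h_numeral[OF hom])
  have a0': "\<phi> a \<noteq> 0" and b0': "\<phi> b \<noteq> 0" using a0 b0 by (simp_all add: h_zero_iff[OF hom])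
  have curve': "\<phi> b ^ 2 = \<phi> a ^ 3 - \<phi> q * \<phi> a"
  proof -
    have "\<phi> (b^2) = \<phi> (a^3 + C*a)" using onQ by simp
    then show ?thesis unfolding Cq by (simp add: h_simps[OF hom])
  qed
  have x4': "\<phi> x4 = (\<phi> b / \<phi> a)^2 - \<phi> a" unfolding x4_def by (simp add: h_simps[OF hom])
  have y4': "\<phi> y4 = - (\<phi> b / \<phi> a) * \<phi> x4" unfolding y4_def by (simp add: h_simps[OF hom])
  obtain l1 l4 where L: "l1 \<noteq> 0" "l4 \<noteq> 0" "map_mat \<phi> A $1$2 = l1 * \<phi> a" "map_mat \<phi> A $3$3 = l4"
    "map_mat \<phi> A = (\<chi> i j. (l1/(\<phi> (of_int r) * \<phi> a)) * lemma_mat (\<phi> (of_int r)) (\<phi> a) (\<phi> b)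
        (l4/(2*l1*\<phi> a^2*\<phi> b)) $ i $ j)"
    using solve_L[OF a0' b0' Rq two' curve' x4' y4' h1 h2 h3 h4] by blast
  define c where "c = A$1$2 / (of_int r * a^2)"
  define \<nu> where "\<nu> = A$3$3 / (c * 2 * of_int r * a^3 * b)"
  have R0': "\<phi> (of_int r) \<noteq> 0" using Rq by auto
  have phic: "\<phi> c = l1/(\<phi> (of_int r) * \<phi> a)"
    using L(3) a0' R0' unfolding c_def by (simp add: h_simps[OF hom] map_mat_def field_simps power2_eq_square)
  have phinu: "\<phi> \<nu> = l4/(2*l1*\<phi> a^2*\<phi> b)"
    using L(1,4) a0' b0' R0' two' unfolding \<nu>_def by (simp add: h_simps[OF hom] map_mat_def phic field_simps power2_eq_square power3_eq_cube)
  have c0: "c \<noteq> 0" using phic L(1) a0' R0' h_0[OF hom] by auto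
  have nu0: "\<nu> \<noteq> 0" using phinu L(1,2) a0' b0' two' h_0[OF hom] by auto
  have "map_mat \<phi> A = map_mat \<phi> (\<chi> i j. c * lemma_mat (of_int r) a b \<nu> $ i $ j)"
    unfolding map_mat_lemma_mat[OF hom] phic phinu by (rule L(5))
  then have "A = (\<chi> i j. c * lemma_mat (of_int r) a b \<nu> $ i $ j)" by (rule map_mat_inj[OF hom])
  then show ?thesis using c0 nu0 by blast
qed

end
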